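(* For all $x\in[0,1/4]$ we have $c_{3,3}(x) = 1/4 - x$.
   Context: For a graph $G$, $k_3(G)$ is the number of triangles in $G$ and $\overline{G}$ the complement. A pair $(x,y)\in[0,1]^2$ is realised by a sequence of graphs $(G_n)_{n\in\mathbb{N}}$ with $G_n$ of order $n$ if $\lim_{n\to\infty} k_3(\overline{G_n})/\binom{n}{3} = x$ and $\lim_{n\to\infty} k_3(G_n)/\binom{n}{3} = y$. $\Omega_{3,3}$ is the set of all realised pairs and $c_{3,3}(x) = \inf\{y : (x,y)\in\Omega_{3,3}\}$. *)

theory Defs
  imports Complex_Main
begin

definition simple_graph_on :: "nat \<Rightarrow> (nat \<Rightarrow> nat \<Rightarrow> bool) \<Rightarrow> bool" where
  "simple_graph_on n E \<longleftrightarrow>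
     (\<forall>u<n. \<not> E u u) \<and> (\<forall>u<n. \<forall>v<n. E u v \<longrightarrow> E v u)"

definition compl_graph :: "(nat \<Rightarrow> nat \<Rightarrow> bool) \<Rightarrow> nat \<Rightarrow> nat \<Rightarrow> bool" where
  "compl_graph E = (\<lambda>u v. u \<noteq> v \<and> \<not> E u v)"

definition k3 :: "nat \<Rightarrow> (nat \<Rightarrow> nat \<Rightarrow> bool) \<Rightarrow> nat" where
  "k3 n E = card {T. T \<subseteq> {..<n} \<and> card T = 3 \<and>
                     (\<forall>u\<in>T. \<forall>v\<in>T. u \<noteq> v \<longrightarrow> E u v)}"

definition realised_by :: "real \<Rightarrow> real \<Rightarrow> (nat \<Rightarrow> nat \<Rightarrow> nat \<Rightarrow> bool) \<Rightarrow> bool" where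
  "realised_by x y G \<longleftrightarrow>
     (\<forall>n. simple_graph_on n (G n)) \<and>
     ((\<lambda>n. real (k3 n (compl_graph (G n))) / real (n choose 3)) \<longlonglongrightarrow> x) \<and>
     ((\<lambda>n. real (k3 n (G n)) / real (n choose 3)) \<longlonglongrightarrow> y)"

definition Omega33 :: "(real \<times> real) set" where
  "Omega33 = {(x, y). x \<in> {0..1} \<and> y \<in> {0..1} \<and> (\<exists>G. realised_by x y G)}"

definition c33 :: "real \<Rightarrow> real" where
  "c33 x = Inf {y. (x, y) \<in> Omega33}"

end

theory Submission
  imports Defs
begin

definition tri :: "nat \<Rightarrow> (nat \<Rightarrow> nat \<Rightarrow> bool) \<Rightarrow> real" where
  "tri n E = (\<Sum>u<n. \<Sum>v<n. \<Sum>w<n. of_bool (E u v \<and> E v w \<and> E u w))"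

lemma tri_card:
  "tri n E = real (card {p \<in> {..<n} \<times> {..<n} \<times> {..<n}.
      (case p of (u,v,w) \<Rightarrow> E u v \<and> E v w \<and> E u w)})"
proof -
  have "tri n E = (\<Sum>p \<in> {..<n} \<times> {..<n} \<times> {..<n}.
      of_bool (case p of (u,v,w) \<Rightarrow> E u v \<and> E v w \<and> E u w))"
    unfolding tri_def sum.cartesian_product by (simp add: case_prod_beta)
  also have "\<dots> = real (card ({..<n} \<times> {..<n} \<times> {..<n} \<inter> {p. case p of (u,v,w) \<Rightarrow> E u v \<and> E v w \<and> E u w}))"
    by (subst sum_of_bool_eq) auto
  also have "{..<n} \<times> {..<n} \<times> {..<n} \<inter> {p. case p of (u,v,w) \<Rightarrow> E u v \<and> E v w \<and> E u w} =
    {p \<in> {..<n} \<times> {..<n} \<times> {..<n}. (case p of (u,v,w) \<Rightarrow> E u v \<and> E v w \<and> E u w)}" by blast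
  finally show ?thesis .
qed

lemma fibre6:
  assumes sg: "simple_graph_on n E"
    and T: "T \<subseteq> {..<n}" "card T = 3" "\<forall>u\<in>T. \<forall>v\<in>T. u \<noteq> v \<longrightarrow> E u v"
  shows "card {p \<in> {..<n} \<times> {..<n} \<times> {..<n}.
      (case p of (u,v,w) \<Rightarrow> E u v \<and> E v w \<and> E u w) \<and> (case p of (u,v,w) \<Rightarrow> {u,v,w}) = T} = 6"
proof -
  obtain x y z where xyz: "T = {x,y,z}" "x \<noteq> y" "y \<noteq> z" "x \<noteq> z"
    using T(2) unfolding card_3_iff by blast
  have irr: "\<And>u. u < n \<Longrightarrow> \<not> E u u" using sg unfolding simple_graph_on_def by auto
  have "{p \<in> {..<n} \<times> {..<n} \<times> {..<n}.
      (case p of (u,v,w) \<Rightarrow> E u v \<and> E v w \<and> E u w) \<and> (case p of (u,v,w) \<Rightarrow> {u,v,w}) = T}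
     = {(x,y,z),(x,z,y),(y,x,z),(y,z,x),(z,x,y),(z,y,x)}" (is "?L = ?R")
  proof
    show "?L \<subseteq> ?R"
    proof
      fix p assume p: "p \<in> ?L"
      obtain u v w where pu: "p = (u,v,w)" by (cases p) auto
      have "u < n \<and> v < n \<and> w < n \<and> E u v \<and> E v w \<and> E u w \<and> {u,v,w} = T"
        using p unfolding pu by simp
      then have uvw: "u < n" "v < n" "w < n" "E u v" "E v w" "E u w" "{u,v,w} = {x,y,z}"
        using xyz(1) by blast+
      have d: "u \<noteq> v" "v \<noteq> w" "u \<noteq> w" using uvw irr by auto
      have "u \<in> {x,y,z}" "v \<in> {x,y,z}" "w \<in> {x,y,z}"
        using uvw(7) by (metis insertCI)+
      then have "(u = x \<or> u = y \<or> u = z) \<and> (v = x \<or> v = y \<or> v = z) \<and> (w = x \<or> w = y \<or> w = z)"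
        by simp
      then have "(u,v,w) \<in> ?R" using d by (elim conjE disjE) simp_all
      then show "p \<in> ?R" using pu by simp
    qed
  next
    have "{x,y,z} \<subseteq> {..<n}" using T(1) xyz(1) by simp
    then have lt: "x < n" "y < n" "z < n" by auto
    have e: "E x y" "E y x" "E x z" "E z x" "E y z" "E z y" using T(3) xyz by auto
    have s: "{x,z,y} = T" "{y,x,z} = T" "{y,z,x} = T" "{z,x,y} = T" "{z,y,x} = T" "{x,y,z} = T"
      using xyz(1) by blast+
    show "?R \<subseteq> ?L" using lt e s by simp
  qed
  moreover have "card ?R = 6" using xyz(2-4) by simp
  ultimately show ?thesis by (simp only:)
qed

lemma k3_tri:
  assumes sg: "simple_graph_on n E"
  shows "tri n E = 6 * real (k3 n E)"
proof -
  let ?A = "{..<n} \<times> {..<n} \<times> {..<n}"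
  let ?D = "{p \<in> ?A. (case p of (u,v,w) \<Rightarrow> E u v \<and> E v w \<and> E u w)}"
  let ?K = "{T. T \<subseteq> {..<n} \<and> card T = 3 \<and> (\<forall>u\<in>T. \<forall>v\<in>T. u \<noteq> v \<longrightarrow> E u v)}"
  let ?h = "\<lambda>p. (case p of (u,v,w) \<Rightarrow> {u,v,w})"
  have irr: "\<And>u. u < n \<Longrightarrow> \<not> E u u" and sym: "\<And>u v. u < n \<Longrightarrow> v < n \<Longrightarrow> E u v \<Longrightarrow> E v u"
    using sg unfolding simple_graph_on_def by auto
  have fK: "finite ?K"
    by (rule finite_subset[of _ "Pow {..<n}"]) auto
  have img: "?h ` ?D \<subseteq> ?K"
  proof
    fix T assume "T \<in> ?h ` ?D"
    then obtain u v w where p: "u < n" "v < n" "w < n" "E u v" "E v w" "E u w" "T = {u,v,w}"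
      by auto
    have d: "u \<noteq> v" "v \<noteq> w" "u \<noteq> w" using p irr by auto
    have "card T = 3" using p(7) d by simp
    moreover have "\<forall>a\<in>T. \<forall>b\<in>T. a \<noteq> b \<longrightarrow> E a b" using p sym by auto
    ultimately show "T \<in> ?K" using p by auto
  qed
  have "card ?D = (\<Sum>T\<in>?K. card {p \<in> ?D. ?h p = T})"
    using sum.group[OF _ fK img, of "\<lambda>_. 1::nat"] by (simp add: Collect_conj_eq)
  also have "\<dots> = (\<Sum>T\<in>?K. 6)"
  proof (rule sum.cong)
    fix T assume "T \<in> ?K"
    then have "T \<subseteq> {..<n}" "card T = 3" "\<forall>u\<in>T. \<forall>v\<in>T. u \<noteq> v \<longrightarrow> E u v" by auto
    from fibre6[OF sg this] show "card {p \<in> ?D. ?h p = T} = 6" by (simp add: Collect_conj_eq Int_assoc)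
  qed simp
  finally have "card ?D = 6 * card ?K" by simp
  then show ?thesis unfolding tri_card k3_def by simp
qed

lemma diag_sum:
  "(\<Sum>u<n. \<Sum>v<n. \<Sum>w<n. of_bool (u = v \<or> v = w \<or> u = w) :: real) \<le> 3 * real n ^ 2"
proof -
  have "(\<Sum>u<n. \<Sum>v<n. \<Sum>w<n. of_bool (u = v \<or> v = w \<or> u = w) :: real)
     \<le> (\<Sum>u<n. \<Sum>v<n. \<Sum>w<n. of_bool (u = v) + of_bool (v = w) + of_bool (u = w))"
    by (intro sum_mono) auto
  also have "\<dots> = 3 * real n ^ 2"
    by (simp add: sum.distrib power2_eq_square)
  finally show ?thesis .
qed

lemma cherry_u:
  assumes irr: "\<not> E u u" and u: "u < n"
  shows "(\<Sum>v<n. \<Sum>w<n. of_bool (u \<noteq> v \<and> v \<noteq> w \<and> u \<noteq> w \<and> (E u v \<noteq> E u w)) :: real)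
     \<le> (real n - 1) ^ 2 / 2"
proof -
  define d where "d = (\<Sum>v<n. of_bool (E u v) :: real)"
  define e where "e = (\<Sum>v<n. of_bool (v \<noteq> u \<and> \<not> E u v) :: real)"
  have pw: "\<And>v w. of_bool (u \<noteq> v \<and> v \<noteq> w \<and> u \<noteq> w \<and> (E u v \<noteq> E u w)) =
      (of_bool (E u v) * of_bool (w \<noteq> u \<and> \<not> E u w) + of_bool (v \<noteq> u \<and> \<not> E u v) * of_bool (E u w) :: real)"
    using irr by (auto simp: of_bool_def)
  have "(\<Sum>v<n. \<Sum>w<n. of_bool (u \<noteq> v \<and> v \<noteq> w \<and> u \<noteq> w \<and> (E u v \<noteq> E u w)) :: real)
      = (\<Sum>v<n. \<Sum>w<n. of_bool (E u v) * of_bool (w \<noteq> u \<and> \<not> E u w) + of_bool (v \<noteq> u \<and> \<not> E u v) * of_bool (E u w) :: real)"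
    by (simp only: pw)
  also have "\<dots> = d * e + e * d"
    unfolding d_def e_def by (simp only: sum.distrib sum_product)
  finally have eq: "(\<Sum>v<n. \<Sum>w<n. of_bool (u \<noteq> v \<and> v \<noteq> w \<and> u \<noteq> w \<and> (E u v \<noteq> E u w)) :: real) = 2 * d * e"
    by simp
  have "d + e = (\<Sum>v<n. of_bool (v \<noteq> u) :: real)"
    unfolding d_def e_def sum.distrib[symmetric] using irr by (intro sum.cong) (auto simp: of_bool_def)
  also have "\<dots> = real (card ({..<n} \<inter> {v. v \<noteq> u}))" by simp
  also have "{..<n} \<inter> {v. v \<noteq> u} = {..<n} - {u}" by auto
  also have "real (card ({..<n} - {u})) = real n - 1" using u by simp
  finally have de: "d + e = real n - 1" .
  have "(d + e)^2 - 4 * d * e = (d - e)^2" by (simp add: power2_eq_square algebra_simps)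
  moreover have "(d - e)^2 \<ge> 0" by simp
  ultimately show ?thesis unfolding eq de[symmetric] by linarith
qed

lemma goodman:
  assumes sg: "simple_graph_on n E"
  shows "tri n E + tri n (compl_graph E) \<ge> real n ^ 3 - 3 * real n ^ 2 - 3/4 * real n * (real n - 1) ^ 2"
proof -
  have irr: "\<And>u. u < n \<Longrightarrow> \<not> E u u" and sym: "\<And>u v. u < n \<Longrightarrow> v < n \<Longrightarrow> E u v \<Longrightarrow> E v u"
    using sg unfolding simple_graph_on_def by auto
  define c :: "nat \<Rightarrow> nat \<Rightarrow> nat \<Rightarrow> real" where
    "c u v w = of_bool (u \<noteq> v \<and> v \<noteq> w \<and> u \<noteq> w \<and> (E u v \<noteq> E u w))" for u v w
  define C where "C = (\<Sum>u<n. \<Sum>v<n. \<Sum>w<n. c u v w)"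
  have pw: "of_bool (E u v \<and> E v w \<and> E u w) + of_bool (compl_graph E u v \<and> compl_graph E v w \<and> compl_graph E u w)
      + (c u v w + c v u w + c w u v) / 2 \<ge> 1 - of_bool (u = v \<or> v = w \<or> u = w)"
    if "u < n" "v < n" "w < n" for u v w
  proof (cases "u = v \<or> v = w \<or> u = w")
    case True
    then show ?thesis unfolding c_def by simp
  next
    case False
    have s: "E v u = E u v" "E w v = E v w" "E w u = E u w"
      using sym that by blast+
    show ?thesis using False unfolding c_def compl_graph_def s
      by (cases "E u v"; cases "E v w"; cases "E u w") simp_all
  qed
  have "(\<Sum>u<n. \<Sum>v<n. \<Sum>w<n. 1 - of_bool (u = v \<or> v = w \<or> u = w) :: real)
     \<le> (\<Sum>u<n. \<Sum>v<n. \<Sum>w<n. of_bool (E u v \<and> E v w \<and> E u w) + of_bool (compl_graph E u v \<and> compl_graph E v w \<and> compl_graph E u w)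
      + (c u v w + c v u w + c w u v) / 2)"
    by (intro sum_mono pw) auto
  also have "\<dots> = tri n E + tri n (compl_graph E) + ((\<Sum>u<n. \<Sum>v<n. \<Sum>w<n. c u v w)
      + (\<Sum>u<n. \<Sum>v<n. \<Sum>w<n. c v u w) + (\<Sum>u<n. \<Sum>v<n. \<Sum>w<n. c w u v)) / 2"
    unfolding tri_def by (simp only: sum.distrib sum_divide_distrib[symmetric])
  also have "(\<Sum>u<n. \<Sum>v<n. \<Sum>w<n. c v u w) = C"
    unfolding C_def by (rule sum.swap)
  also have "(\<Sum>u<n. \<Sum>v<n. \<Sum>w<n. c w u v) = (\<Sum>u<n. \<Sum>w<n. \<Sum>v<n. c w u v)"
    by (intro sum.cong refl sum.swap)
  also have "\<dots> = C"
    unfolding C_def by (rule sum.swap)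
  finally have main: "(\<Sum>u<n. \<Sum>v<n. \<Sum>w<n. 1 - of_bool (u = v \<or> v = w \<or> u = w) :: real)
      \<le> tri n E + tri n (compl_graph E) + 3 * C / 2"
    unfolding C_def by simp
  have "(\<Sum>u<n. \<Sum>v<n. \<Sum>w<n. 1 - of_bool (u = v \<or> v = w \<or> u = w) :: real)
     = real n ^ 3 - (\<Sum>u<n. \<Sum>v<n. \<Sum>w<n. of_bool (u = v \<or> v = w \<or> u = w) :: real)"
    by (simp add: sum_subtractf power3_eq_cube)
  also have "\<dots> \<ge> real n ^ 3 - 3 * real n ^ 2" using diag_sum[of n] by linarith
  finally have lo: "real n ^ 3 - 3 * real n ^ 2 \<le> tri n E + tri n (compl_graph E) + 3 * C / 2"
    using main by linarith
  have "C \<le> (\<Sum>u<n. (real n - 1) ^ 2 / 2)"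
    unfolding C_def c_def by (intro sum_mono cherry_u irr) auto
  also have "\<dots> = real n * (real n - 1) ^ 2 / 2" by simp
  finally show ?thesis using lo by linarith
qed

lemma sum_by_type:
  fixes g :: "nat \<Rightarrow> real"
  assumes "finite A" "finite T" "t ` A \<subseteq> T"
  shows "(\<Sum>a\<in>A. g (t a)) = (\<Sum>i\<in>T. real (card {a\<in>A. t a = i}) * g i)"
proof -
  have "(\<Sum>a\<in>A. g (t a)) = (\<Sum>i\<in>T. \<Sum>a\<in>{a\<in>A. t a = i}. g (t a))"
    using sum.group[OF assms, of "\<lambda>a. g (t a)"] by simp
  also have "\<dots> = (\<Sum>i\<in>T. real (card {a\<in>A. t a = i}) * g i)"
  proof (rule sum.cong[OF refl])
    fix i assume "i \<in> T"
    have "(\<Sum>a\<in>{a\<in>A. t a = i}. g (t a)) = (\<Sum>a\<in>{a\<in>A. t a = i}. g i)"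
      by (rule sum.cong) auto
    then show "(\<Sum>a\<in>{a\<in>A. t a = i}. g (t a)) = real (card {a\<in>A. t a = i}) * g i"
      by simp
  qed
  finally show ?thesis .
qed

lemma blowup_sum:
  fixes R :: "nat \<Rightarrow> nat \<Rightarrow> bool" and t :: "nat \<Rightarrow> nat"
  assumes T: "t ` {..<n} \<subseteq> T" "finite T"
  shows "(\<Sum>u<n. \<Sum>v<n. \<Sum>w<n. of_bool (R (t u) (t v) \<and> R (t v) (t w) \<and> R (t u) (t w)) :: real)
    = (\<Sum>i\<in>T. real (card {a\<in>{..<n}. t a = i}) * (\<Sum>j\<in>T. real (card {a\<in>{..<n}. t a = j}) *
        (\<Sum>k\<in>T. real (card {a\<in>{..<n}. t a = k}) * of_bool (R i j \<and> R j k \<and> R i k))))"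
proof -
  define F where "F i j k = (of_bool (R i j \<and> R j k \<and> R i k) :: real)" for i j k
  define N where "N i = real (card {a\<in>{..<n}. t a = i})" for i
  have 1: "(\<Sum>w<n. F x y (t w)) = (\<Sum>k\<in>T. N k * F x y k)" for x y
    unfolding N_def by (rule sum_by_type[OF _ T(2) T(1)]) simp
  have 2: "(\<Sum>v<n. (\<Sum>k\<in>T. N k * F x (t v) k)) = (\<Sum>j\<in>T. N j * (\<Sum>k\<in>T. N k * F x j k))" for x
    unfolding N_def by (rule sum_by_type[OF _ T(2) T(1), of "\<lambda>j. \<Sum>k\<in>T. _ k * F x j k"]) simp
  have 3: "(\<Sum>u<n. (\<Sum>j\<in>T. N j * (\<Sum>k\<in>T. N k * F (t u) j k))) = (\<Sum>i\<in>T. N i * (\<Sum>j\<in>T. N j * (\<Sum>k\<in>T. N k * F i j k)))"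
    unfolding N_def by (rule sum_by_type[OF _ T(2) T(1), of "\<lambda>i. \<Sum>j\<in>T. _ j * (\<Sum>k\<in>T. _ k * F i j k)"]) simp
  have "(\<Sum>u<n. \<Sum>v<n. \<Sum>w<n. F (t u) (t v) (t w)) = (\<Sum>i\<in>T. N i * (\<Sum>j\<in>T. N j * (\<Sum>k\<in>T. N k * F i j k)))"
    by (simp only: 1 2 3)
  then show ?thesis unfolding F_def N_def .
qed

lemma blowup_tri:
  fixes R :: "nat \<Rightarrow> nat \<Rightarrow> bool" and t :: "nat \<Rightarrow> nat" and n :: nat
  defines "S \<equiv> (\<Sum>u<n. \<Sum>v<n. \<Sum>w<n. of_bool (R (t u) (t v) \<and> R (t v) (t w) \<and> R (t u) (t w)) :: real)"
  shows "tri n (\<lambda>u v. u \<noteq> v \<and> R (t u) (t v)) \<le> S"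
    and "S - 3 * real n ^ 2 \<le> tri n (\<lambda>u v. u \<noteq> v \<and> R (t u) (t v))"
proof -
  show "tri n (\<lambda>u v. u \<noteq> v \<and> R (t u) (t v)) \<le> S"
    unfolding tri_def S_def by (intro sum_mono) auto
  have "S - (\<Sum>u<n. \<Sum>v<n. \<Sum>w<n. of_bool (u = v \<or> v = w \<or> u = w) :: real)
      = (\<Sum>u<n. \<Sum>v<n. \<Sum>w<n. of_bool (R (t u) (t v) \<and> R (t v) (t w) \<and> R (t u) (t w)) - of_bool (u = v \<or> v = w \<or> u = w) :: real)"
    unfolding S_def by (simp only: sum_subtractf)
  also have "\<dots> \<le> tri n (\<lambda>u v. u \<noteq> v \<and> R (t u) (t v))"
    unfolding tri_def by (intro sum_mono) auto
  finally show "S - 3 * real n ^ 2 \<le> tri n (\<lambda>u v. u \<noteq> v \<and> R (t u) (t v))"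
    using diag_sum[of n] by linarith
qed

lemma lim_aux1: "(\<lambda>n. real n ^ 3 / (real n * (real n - 1) * (real n - 2))) \<longlonglongrightarrow> 1"
proof -
  have "(\<lambda>n. 1 / ((1 - inverse (real n)) * (1 - 2 * inverse (real n)))) \<longlonglongrightarrow> 1 / ((1 - 0) * (1 - 2 * 0))"
    by (intro tendsto_intros lim_inverse_n) auto
  then have *: "(\<lambda>n. 1 / ((1 - inverse (real n)) * (1 - 2 * inverse (real n)))) \<longlonglongrightarrow> 1" by simp
  show ?thesis
  proof (rule Lim_transform_eventually[OF *])
    show "\<forall>\<^sub>F n in sequentially. 1 / ((1 - inverse (real n)) * (1 - 2 * inverse (real n))) = real n ^ 3 / (real n * (real n - 1) * (real n - 2))"
      using eventually_ge_at_top[of "3::nat"]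
    proof (rule eventually_mono)
      fix n :: nat assume n: "3 \<le> n"
      then have n3: "real n \<ge> 3" by simp
      have e: "(1 - inverse (real n)) * (1 - 2 * inverse (real n)) = (real n * (real n - 1) * (real n - 2)) / real n ^ 3"
        using n3 by (simp add: field_simps power3_eq_cube)
      show "1 / ((1 - inverse (real n)) * (1 - 2 * inverse (real n))) = real n ^ 3 / (real n * (real n - 1) * (real n - 2))"
        unfolding e by simp
    qed
  qed
qed

lemma lim_aux2: "(\<lambda>n. (real n ^ 3 - 3 * real n ^ 2 - 3/4 * real n * (real n - 1) ^ 2) / (real n * (real n - 1) * (real n - 2))) \<longlonglongrightarrow> 1/4"
proof -
  have "(\<lambda>n. (1 - 3 * inverse (real n) - 3/4 * (1 - inverse (real n))^2) / ((1 - inverse (real n)) * (1 - 2 * inverse (real n))))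
      \<longlonglongrightarrow> (1 - 3 * 0 - 3/4 * (1 - 0)^2) / ((1 - 0) * (1 - 2 * 0))"
    by (intro tendsto_intros lim_inverse_n) auto
  then have *: "(\<lambda>n. (1 - 3 * inverse (real n) - 3/4 * (1 - inverse (real n))^2) / ((1 - inverse (real n)) * (1 - 2 * inverse (real n))))
      \<longlonglongrightarrow> 1/4" by simp
  show ?thesis
  proof (rule Lim_transform_eventually[OF *])
    show "\<forall>\<^sub>F n in sequentially. (1 - 3 * inverse (real n) - 3/4 * (1 - inverse (real n))^2) / ((1 - inverse (real n)) * (1 - 2 * inverse (real n)))
       = (real n ^ 3 - 3 * real n ^ 2 - 3/4 * real n * (real n - 1) ^ 2) / (real n * (real n - 1) * (real n - 2))"
      using eventually_ge_at_top[of "3::nat"]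
    proof (rule eventually_mono)
      fix n :: nat assume n: "3 \<le> n"
      then have n3: "real n \<ge> 3" by simp
      have e: "(1 - inverse (real n)) * (1 - 2 * inverse (real n)) = (real n * (real n - 1) * (real n - 2)) / real n ^ 3"
        using n3 by (simp add: field_simps power3_eq_cube)
      have e2: "1 - 3 * inverse (real n) - 3/4 * (1 - inverse (real n))^2 = (real n ^ 3 - 3 * real n ^ 2 - 3/4 * real n * (real n - 1) ^ 2) / real n ^ 3"
        using n3 by (simp add: field_simps power3_eq_cube power2_eq_square)
      have nz: "real n ^ 3 \<noteq> 0" using n3 by simp
      show "(1 - 3 * inverse (real n) - 3/4 * (1 - inverse (real n))^2) / ((1 - inverse (real n)) * (1 - 2 * inverse (real n)))
       = (real n ^ 3 - 3 * real n ^ 2 - 3/4 * real n * (real n - 1) ^ 2) / (real n * (real n - 1) * (real n - 2))"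
        unfolding e e2 using nz by simp
    qed
  qed
qed

lemma tri_limit:
  fixes S tr :: "nat \<Rightarrow> real"
  assumes lo: "\<And>n. S n - 3 * real n ^ 2 \<le> tr n" and up: "\<And>n. tr n \<le> S n"
    and lim: "(\<lambda>n. S n / real n ^ 3) \<longlonglongrightarrow> L"
  shows "(\<lambda>n. tr n / (real n * (real n - 1) * (real n - 2))) \<longlonglongrightarrow> L"
proof -
  have l1: "(\<lambda>n. S n / real n ^ 3 - 3 * inverse (real n)) \<longlonglongrightarrow> L - 3 * 0"
    by (intro tendsto_intros lim lim_inverse_n)
  have "(\<lambda>n. tr n / real n ^ 3) \<longlonglongrightarrow> L"
  proof (rule tendsto_sandwich[OF _ _ l1[simplified] lim])
    show "\<forall>\<^sub>F n in sequentially. S n / real n ^ 3 - 3 * inverse (real n) \<le> tr n / real n ^ 3"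
      using eventually_ge_at_top[of "1::nat"]
    proof (rule eventually_mono)
      fix n :: nat assume "1 \<le> n"
      then have p: "real n ^ 3 > 0" by simp
      have "S n / real n ^ 3 - 3 * inverse (real n) = (S n - 3 * real n ^ 2) / real n ^ 3"
        using \<open>1 \<le> n\<close> by (simp add: field_simps power3_eq_cube power2_eq_square)
      also have "\<dots> \<le> tr n / real n ^ 3" using lo[of n] p by (simp add: divide_right_mono)
      finally show "S n / real n ^ 3 - 3 * inverse (real n) \<le> tr n / real n ^ 3" .
    qed
    show "\<forall>\<^sub>F n in sequentially. tr n / real n ^ 3 \<le> S n / real n ^ 3"
      using up by (intro always_eventually allI divide_right_mono) auto
  qed
  then have "(\<lambda>n. tr n / real n ^ 3 * (real n ^ 3 / (real n * (real n - 1) * (real n - 2)))) \<longlonglongrightarrow> L * 1"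
    by (intro tendsto_intros lim_aux1)
  then have lim': "(\<lambda>n. tr n / real n ^ 3 * (real n ^ 3 / (real n * (real n - 1) * (real n - 2)))) \<longlonglongrightarrow> L"
    by simp
  show ?thesis
  proof (rule Lim_transform_eventually[OF lim'])
    show "\<forall>\<^sub>F n in sequentially. tr n / real n ^ 3 * (real n ^ 3 / (real n * (real n - 1) * (real n - 2))) = tr n / (real n * (real n - 1) * (real n - 2))"
      using eventually_ge_at_top[of "1::nat"]
      by (rule eventually_mono) simp
  qed
qed

lemma count_lim:
  assumes "0 \<le> a" "a \<le> b" "b \<le> 1"
  shows "(\<lambda>n. real (card {v\<in>{..<n}. a * real n \<le> real v \<and> real v < b * real n}) / real n) \<longlonglongrightarrow> b - a"
proof -
  have eq: "{v\<in>{..<n}. a * real n \<le> real v \<and> real v < b * real n} = {nat \<lceil>a * real n\<rceil>..<nat \<lceil>b * real n\<rceil>}" for n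
  proof -
    have "b * real n \<le> real n" using assms by (simp add: mult_left_le_one_le)
    then show ?thesis
      by (auto simp: nat_le_iff ceiling_le_iff zless_nat_eq_int_zless less_ceiling_iff)
  qed
  have cr: "real (card {v\<in>{..<n}. a * real n \<le> real v \<and> real v < b * real n}) = of_int \<lceil>b * real n\<rceil> - of_int \<lceil>a * real n\<rceil>" for n
  proof -
    have "a * real n \<le> b * real n" using assms by (simp add: mult_right_mono)
    then have m: "\<lceil>a * real n\<rceil> \<le> \<lceil>b * real n\<rceil>" by (rule ceiling_mono)
    have "0 \<le> a * real n" using assms by simp
    then have "0 \<le> \<lceil>a * real n\<rceil>" by linarith
    then have "nat \<lceil>b * real n\<rceil> - nat \<lceil>a * real n\<rceil> = nat (\<lceil>b * real n\<rceil> - \<lceil>a * real n\<rceil>)"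
      using m by (simp add: nat_diff_distrib)
    moreover have "real (nat (\<lceil>b * real n\<rceil> - \<lceil>a * real n\<rceil>)) = of_int (\<lceil>b * real n\<rceil> - \<lceil>a * real n\<rceil>)"
      using m by (intro of_nat_nat) simp
    ultimately show ?thesis unfolding eq by simp
  qed
  have l1: "(\<lambda>n. (b - a) - inverse (real n)) \<longlonglongrightarrow> (b - a) - 0"
    and l2: "(\<lambda>n. (b - a) + inverse (real n)) \<longlonglongrightarrow> (b - a) + 0"
    by (intro tendsto_intros lim_inverse_n)+
  show ?thesis
  proof (rule tendsto_sandwich[OF _ _ l1[simplified] l2[simplified]])
    show "\<forall>\<^sub>F n in sequentially. b - a - inverse (real n) \<le> real (card {v\<in>{..<n}. a * real n \<le> real v \<and> real v < b * real n}) / real n"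
      using eventually_ge_at_top[of "1::nat"]
    proof (rule eventually_mono)
      fix n :: nat assume "1 \<le> n"
      then have p: "real n > 0" by simp
      have c1: "b * real n \<le> of_int \<lceil>b * real n\<rceil>" by (rule le_of_int_ceiling)
      have c2: "of_int \<lceil>a * real n\<rceil> \<le> a * real n + 1" by (rule of_int_ceiling_le_add_one)
      have x: "(b - a - inverse (real n)) * real n = b * real n - a * real n - 1"
        using p by (simp add: field_simps)
      have "(b - a - inverse (real n)) * real n \<le> of_int \<lceil>b * real n\<rceil> - of_int \<lceil>a * real n\<rceil>"
        unfolding x using c1 c2 by linarith
      then show "b - a - inverse (real n) \<le> real (card {v\<in>{..<n}. a * real n \<le> real v \<and> real v < b * real n}) / real n"
        unfolding cr using p by (simp add: le_divide_eq)
    qed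
    show "\<forall>\<^sub>F n in sequentially. real (card {v\<in>{..<n}. a * real n \<le> real v \<and> real v < b * real n}) / real n \<le> b - a + inverse (real n)"
      using eventually_ge_at_top[of "1::nat"]
    proof (rule eventually_mono)
      fix n :: nat assume "1 \<le> n"
      then have p: "real n > 0" by simp
      have c1: "a * real n \<le> of_int \<lceil>a * real n\<rceil>" by (rule le_of_int_ceiling)
      have c2: "of_int \<lceil>b * real n\<rceil> \<le> b * real n + 1" by (rule of_int_ceiling_le_add_one)
      have x: "(b - a + inverse (real n)) * real n = b * real n - a * real n + 1"
        using p by (simp add: field_simps)
      have "of_int \<lceil>b * real n\<rceil> - of_int \<lceil>a * real n\<rceil> \<le> (b - a + inverse (real n)) * real n"
        unfolding x using c1 c2 by linarith
      then show "real (card {v\<in>{..<n}. a * real n \<le> real v \<and> real v < b * real n}) / real n \<le> b - a + inverse (real n)"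
        unfolding cr using p by (simp add: divide_le_eq)
    qed
  qed
qed

definition M33 :: "nat \<Rightarrow> nat \<Rightarrow> bool" where
  "M33 i j \<longleftrightarrow> (i = 1 \<and> j = 1) \<or> (i = 3 \<and> j = 3) \<or> (i = 0 \<and> j = 1) \<or> (i = 1 \<and> j = 0)
     \<or> (i = 0 \<and> j = 2) \<or> (i = 2 \<and> j = 0) \<or> (i = 2 \<and> j = 3) \<or> (i = 3 \<and> j = 2)"

definition vty :: "real \<Rightarrow> nat \<Rightarrow> nat \<Rightarrow> nat" where
  "vty q n v = (if real v < q * real n then 0 else if real v < 1/2 * real n then 1
      else if real v < (1/2 + q) * real n then 2 else 3)"

definition Gq :: "real \<Rightarrow> nat \<Rightarrow> nat \<Rightarrow> nat \<Rightarrow> bool" where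
  "Gq q n u v \<longleftrightarrow> u \<noteq> v \<and> M33 (vty q n u) (vty q n v)"

definition alpha :: "real \<Rightarrow> nat \<Rightarrow> real" where
  "alpha q i = (if i = 0 \<or> i = 2 then q else 1/2 - q)"

lemma vty_range: "vty q n ` {..<n} \<subseteq> {0,1,2,3}"
  by (auto simp: vty_def)

lemma vty_count:
  assumes q: "0 \<le> q" "q \<le> 1/2" and i: "i \<in> {0,1,2,3}"
  shows "(\<lambda>n. real (card {v\<in>{..<n}. vty q n v = i}) / real n) \<longlonglongrightarrow> alpha q i"
proof -
  have o1: "q * real n \<le> 1/2 * real n" for n using q by (intro mult_right_mono) auto
  have o2: "1/2 * real n \<le> (1/2 + q) * real n" for n using q by (intro mult_right_mono) auto
  have o3: "(1/2 + q) * real n \<le> real n" for n using q mult_right_mono[of "1/2 + q" 1 "real n"] by auto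
  consider "i = 0" | "i = 1" | "i = 2" | "i = 3" using i by auto
  then show ?thesis
  proof cases
    case 1
    have "{v\<in>{..<n}. vty q n v = i} = {v\<in>{..<n}. 0 * real n \<le> real v \<and> real v < q * real n}" for n
      using 1 by (auto simp: vty_def)
    then show ?thesis using count_lim[of 0 q] q 1 by (simp add: alpha_def)
  next
    case 2
    have "{v\<in>{..<n}. vty q n v = i} = {v\<in>{..<n}. q * real n \<le> real v \<and> real v < 1/2 * real n}" for n
      using 2 by (auto simp: vty_def)
    then show ?thesis using count_lim[of q "1/2"] q 2 by (simp add: alpha_def)
  next
    case 3
    have "{v\<in>{..<n}. vty q n v = i} = {v\<in>{..<n}. 1/2 * real n \<le> real v \<and> real v < (1/2 + q) * real n}" for n
      using 3 o1[of n] by (auto simp: vty_def)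
    then show ?thesis using count_lim[of "1/2" "1/2 + q"] q 3 by (simp add: alpha_def)
  next
    case 4
    have "{v\<in>{..<n}. vty q n v = i} = {v\<in>{..<n}. (1/2 + q) * real n \<le> real v \<and> real v < 1 * real n}" for n
      using 4 o1[of n] o2[of n] o3[of n] by (auto simp: vty_def)
    then show ?thesis using count_lim[of "1/2 + q" 1] q 4 by (simp add: alpha_def)
  qed
qed

lemma general_limit:
  fixes R :: "nat \<Rightarrow> nat \<Rightarrow> bool"
  assumes q: "0 \<le> q" "q \<le> 1/2"
  shows "(\<lambda>n. tri n (\<lambda>u v. u \<noteq> v \<and> R (vty q n u) (vty q n v)) / (real n * (real n - 1) * (real n - 2)))
    \<longlonglongrightarrow> (\<Sum>i\<in>{0,1,2,3}. alpha q i * (\<Sum>j\<in>{0,1,2,3}. alpha q j * (\<Sum>k\<in>{0,1,2,3}. alpha q k * of_bool (R i j \<and> R j k \<and> R i k))))"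
proof (rule tri_limit)
  let ?T = "{0,1,2,3} :: nat set"
  define N where "N n i = real (card {a\<in>{..<n}. vty q n a = i})" for n i
  define S where "S n = (\<Sum>u<n. \<Sum>v<n. \<Sum>w<n. of_bool (R (vty q n u) (vty q n v) \<and> R (vty q n v) (vty q n w) \<and> R (vty q n u) (vty q n w)) :: real)" for n
  show "S n - 3 * real n ^ 2 \<le> tri n (\<lambda>u v. u \<noteq> v \<and> R (vty q n u) (vty q n v))" for n
    unfolding S_def by (rule blowup_tri(2))
  show "tri n (\<lambda>u v. u \<noteq> v \<and> R (vty q n u) (vty q n v)) \<le> S n" for n
    unfolding S_def by (rule blowup_tri(1))
  have eqS: "S n / real n ^ 3 = (\<Sum>i\<in>?T. (N n i / real n) * (\<Sum>j\<in>?T. (N n j / real n) * (\<Sum>k\<in>?T. (N n k / real n) * of_bool (R i j \<and> R j k \<and> R i k))))" for n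
  proof -
    have "S n = (\<Sum>i\<in>?T. N n i * (\<Sum>j\<in>?T. N n j * (\<Sum>k\<in>?T. N n k * of_bool (R i j \<and> R j k \<and> R i k))))"
      unfolding S_def N_def by (rule blowup_sum[OF vty_range]) simp
    then show ?thesis
      by (simp add: sum_divide_distrib[symmetric] power3_eq_cube sum_distrib_left mult.assoc)
  qed
  have "(\<lambda>n. (\<Sum>i\<in>?T. (N n i / real n) * (\<Sum>j\<in>?T. (N n j / real n) * (\<Sum>k\<in>?T. (N n k / real n) * of_bool (R i j \<and> R j k \<and> R i k)))))
     \<longlonglongrightarrow> (\<Sum>i\<in>?T. alpha q i * (\<Sum>j\<in>?T. alpha q j * (\<Sum>k\<in>?T. alpha q k * of_bool (R i j \<and> R j k \<and> R i k))))"
    unfolding N_def by (intro tendsto_sum tendsto_mult tendsto_const vty_count[OF q])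
  then show "(\<lambda>n. S n / real n ^ 3) \<longlonglongrightarrow> (\<Sum>i\<in>?T. alpha q i * (\<Sum>j\<in>?T. alpha q j * (\<Sum>k\<in>?T. alpha q k * of_bool (R i j \<and> R j k \<and> R i k))))"
    unfolding eqS .
qed

lemma choose2: "real (n choose 2) = real n * (real n - 1) / 2"
  by (induction n) (simp_all add: numeral_2_eq_2 field_simps)

lemma choose3: "real (n choose 3) = real n * (real n - 1) * (real n - 2) / 6"
proof (induction n)
  case 0 then show ?case by simp
next
  case (Suc n)
  have "(Suc n) choose 3 = (n choose 2) + (n choose 3)"
    by (simp add: numeral_3_eq_3 numeral_2_eq_2)
  then show ?case using Suc choose2[of n] by (simp add: field_simps)
qed

lemma val_G: "(\<Sum>i\<in>{0,1,2,3::nat}. alpha q i * (\<Sum>j\<in>{0,1,2,3::nat}. alpha q j * (\<Sum>k\<in>{0,1,2,3::nat}. alpha q k * of_bool (M33 i j \<and> M33 j k \<and> M33 i k))))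
   = 1/4 - (3 * q^2 - 4 * q^3)"
  by (simp add: alpha_def M33_def) (simp add: power2_eq_square power3_eq_cube field_simps)

definition M33c :: "nat \<Rightarrow> nat \<Rightarrow> bool" where
  "M33c i j \<longleftrightarrow> (i = 0 \<and> j = 0) \<or> (i = 2 \<and> j = 2) \<or> (i = 0 \<and> j = 3) \<or> (i = 3 \<and> j = 0)
     \<or> (i = 1 \<and> j = 2) \<or> (i = 2 \<and> j = 1) \<or> (i = 1 \<and> j = 3) \<or> (i = 3 \<and> j = 1)"

lemma val_Gc: "(\<Sum>i\<in>{0,1,2,3::nat}. alpha q i * (\<Sum>j\<in>{0,1,2,3::nat}. alpha q j * (\<Sum>k\<in>{0,1,2,3::nat}. alpha q k * of_bool (M33c i j \<and> M33c j k \<and> M33c i k))))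
   = 3 * q^2 - 4 * q^3"
  by (simp add: alpha_def M33c_def) (simp add: power2_eq_square power3_eq_cube field_simps)

lemma vty_le3: "vty q n u \<le> 3"
  by (simp add: vty_def)

lemma M33c_compl: "a \<le> 3 \<Longrightarrow> b \<le> 3 \<Longrightarrow> (\<not> M33 a b) = M33c a b"
  unfolding M33_def M33c_def by (cases a; cases b) (auto simp: le_Suc_eq numeral_3_eq_3 numeral_2_eq_2)

lemma Gq_simple: "simple_graph_on n (Gq q n)"
  unfolding simple_graph_on_def Gq_def M33_def by auto

lemma Gq_compl: "compl_graph (Gq q n) = (\<lambda>u v. u \<noteq> v \<and> M33c (vty q n u) (vty q n v))"
  by (auto simp: fun_eq_iff compl_graph_def Gq_def M33c_compl[OF vty_le3 vty_le3, symmetric])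

lemma compl_simple: "simple_graph_on n E \<Longrightarrow> simple_graph_on n (compl_graph E)"
  unfolding simple_graph_on_def compl_graph_def by auto

lemma k3_ratio: "simple_graph_on n E \<Longrightarrow>
   real (k3 n E) / real (n choose 3) = tri n E / (real n * (real n - 1) * (real n - 2))"
  using k3_tri[of n E] unfolding choose3 by simp

lemma construct:
  assumes q: "0 \<le> q" "q \<le> 1/2"
  shows "realised_by (3 * q^2 - 4 * q^3) (1/4 - (3 * q^2 - 4 * q^3)) (Gq q)"
  unfolding realised_by_def
proof (intro conjI allI)
  show "simple_graph_on n (Gq q n)" for n by (rule Gq_simple)
  have "(\<lambda>n. tri n (\<lambda>u v. u \<noteq> v \<and> M33c (vty q n u) (vty q n v)) / (real n * (real n - 1) * (real n - 2)))
       \<longlonglongrightarrow> 3 * q^2 - 4 * q^3"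
    using general_limit[OF q, of M33c] unfolding val_Gc .
  then show "(\<lambda>n. real (k3 n (compl_graph (Gq q n))) / real (n choose 3)) \<longlonglongrightarrow> 3 * q^2 - 4 * q^3"
    unfolding k3_ratio[OF compl_simple[OF Gq_simple]] unfolding Gq_compl .
  have "(\<lambda>n. tri n (\<lambda>u v. u \<noteq> v \<and> M33 (vty q n u) (vty q n v)) / (real n * (real n - 1) * (real n - 2)))
       \<longlonglongrightarrow> 1/4 - (3 * q^2 - 4 * q^3)"
    using general_limit[OF q, of M33] unfolding val_G .
  then show "(\<lambda>n. real (k3 n (Gq q n)) / real (n choose 3)) \<longlonglongrightarrow> 1/4 - (3 * q^2 - 4 * q^3)"
    unfolding k3_ratio[OF Gq_simple] unfolding Gq_def[abs_def] .
qed

lemma lower: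
  assumes "realised_by x y G"
  shows "1/4 \<le> x + y"
proof -
  have sg: "\<And>n. simple_graph_on n (G n)"
    and lx: "(\<lambda>n. real (k3 n (compl_graph (G n))) / real (n choose 3)) \<longlonglongrightarrow> x"
    and ly: "(\<lambda>n. real (k3 n (G n)) / real (n choose 3)) \<longlonglongrightarrow> y"
    using assms unfolding realised_by_def by auto
  have lim: "(\<lambda>n. real (k3 n (compl_graph (G n))) / real (n choose 3) + real (k3 n (G n)) / real (n choose 3)) \<longlonglongrightarrow> x + y"
    by (rule tendsto_add[OF lx ly])
  have ev: "\<forall>\<^sub>F n in sequentially. (real n ^ 3 - 3 * real n ^ 2 - 3/4 * real n * (real n - 1) ^ 2) / (real n * (real n - 1) * (real n - 2))
      \<le> real (k3 n (compl_graph (G n))) / real (n choose 3) + real (k3 n (G n)) / real (n choose 3)"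
    using eventually_ge_at_top[of "3::nat"]
  proof (rule eventually_mono)
    fix n :: nat assume n: "3 \<le> n"
    then have P: "real n * (real n - 1) * (real n - 2) > 0" by simp
    have "real (k3 n (compl_graph (G n))) / real (n choose 3) + real (k3 n (G n)) / real (n choose 3)
        = (tri n (G n) + tri n (compl_graph (G n))) / (real n * (real n - 1) * (real n - 2))"
      unfolding k3_ratio[OF sg] k3_ratio[OF compl_simple[OF sg]] by (simp add: add_divide_distrib)
    moreover have "(real n ^ 3 - 3 * real n ^ 2 - 3/4 * real n * (real n - 1) ^ 2) / (real n * (real n - 1) * (real n - 2))
        \<le> (tri n (G n) + tri n (compl_graph (G n))) / (real n * (real n - 1) * (real n - 2))"
      using goodman[OF sg, of n] P by (intro divide_right_mono) auto
    ultimately show "(real n ^ 3 - 3 * real n ^ 2 - 3/4 * real n * (real n - 1) ^ 2) / (real n * (real n - 1) * (real n - 2))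
      \<le> real (k3 n (compl_graph (G n))) / real (n choose 3) + real (k3 n (G n)) / real (n choose 3)"
      by simp
  qed
  show ?thesis
    by (rule tendsto_le[OF trivial_limit_sequentially lim lim_aux2 ev])
qed

theorem lemma2p3:
  fixes x :: real
  assumes "0 \<le> x" and "x \<le> 1/4"
  shows "c33 x = 1/4 - x"
proof -
  have "\<exists>q. 0 \<le> q \<and> q \<le> 1/2 \<and> (\<lambda>q. 3 * q^2 - 4 * q^3) q = x"
  proof (rule IVT')
    show "(\<lambda>q. 3 * q^2 - 4 * q^3) 0 \<le> x" using assms by simp
    show "x \<le> (\<lambda>q. 3 * q^2 - 4 * q^3) (1/2)" using assms by (simp add: power2_eq_square power3_eq_cube)
    show "(0::real) \<le> 1/2" by simp
    show "continuous_on {0..1/2} (\<lambda>q::real. 3 * q^2 - 4 * q^3)" by (intro continuous_intros)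
  qed
  then obtain q where q: "0 \<le> q" "q \<le> 1/2" "3 * q^2 - 4 * q^3 = x" by auto
  have mem: "(x, 1/4 - x) \<in> Omega33"
    unfolding Omega33_def using construct[OF q(1,2)] q(3) assms by auto
  have lb: "1/4 - x \<le> y" if "y \<in> {y. (x, y) \<in> Omega33}" for y
    using that lower unfolding Omega33_def by force
  show ?thesis unfolding c33_def
    by (rule cInf_eq_minimum) (use mem lb in auto)
qed

end
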